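(* Let $n>1$ and let $\Omega_S$ be the set of all real $2\times 2n$ matrices of the form $A=\begin{bmatrix} w & 0\\ 0 & -w\end{bmatrix}$, $w\in\mathbb{R}^n$. Let $L(A)$ be the span of the rows of $A$, $L(\Omega_S)=\bigcup_{A\in\Omega_S}L(A)\subset\mathbb{R}^{2n}$, let $\mathcal{P}_{\Omega_S}$ be the set of all real polynomials in $2n$ variables vanishing identically on $L(\Omega_S)$, and let $\mathcal{N}_S=\bigcap_{p\in\mathcal{P}_{\Omega_S}}\{z\in\mathbb{R}^{2n}:p(z)=0\}$. Then \[ L(\Omega_S)=\overline{L(\Omega_S)}=\mathcal{N}_S, \] where the bar denotes closure in $\mathbb{R}^{2n}$. *)

theory Defs
  imports "HOL-Analysis.Analysis"
begin

text \<open>Real polynomial functions on real^'m (polynomials in CARD('m) variables,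
  identified with the functions they induce; over the reals this identification is faithful).\<close>
inductive real_polyfun :: "(real^'m \<Rightarrow> real) \<Rightarrow> bool" where
  const: "real_polyfun (\<lambda>x. c)"
| coord: "real_polyfun (\<lambda>x. x $ i)"
| add: "real_polyfun p \<Longrightarrow> real_polyfun q \<Longrightarrow> real_polyfun (\<lambda>x. p x + q x)"
| mult: "real_polyfun p \<Longrightarrow> real_polyfun q \<Longrightarrow> real_polyfun (\<lambda>x. p x * q x)"

text \<open>R^{2n} is modelled as real^('n + 'n): first block = Inl, second block = Inr.\<close>
definition OmegaS :: "(real^('n::finite + 'n)^2) set" where
  "OmegaS = {A. \<exists>w::real^'n.
      A = (\<chi> i j. if i = 1 then (case j of Inl k \<Rightarrow> w $ k | Inr k \<Rightarrow> 0)
                   else (case j of Inl k \<Rightarrow> 0 | Inr k \<Rightarrow> - (w $ k)))}"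

definition LA :: "real^('n::finite + 'n)^2 \<Rightarrow> (real^('n + 'n)) set" where
  "LA A = span (rows A)"

definition LOmegaS :: "(real^('n::finite + 'n)) set" where
  "LOmegaS = (\<Union>A\<in>OmegaS. LA A)"

definition POmegaS :: "(real^('n::finite + 'n) \<Rightarrow> real) set" where
  "POmegaS = {p. real_polyfun p \<and> (\<forall>z\<in>LOmegaS. p z = 0)}"

definition NS :: "(real^('n::finite + 'n)) set" where
  "NS = (\<Inter>p\<in>POmegaS. {z. p z = 0})"

end

theory Submission
  imports Defs
begin

definition uu :: "real^'n::finite \<Rightarrow> real^('n+'n)" where
  "uu w = (\<chi> j. case j of Inl k \<Rightarrow> w $ k | Inr k \<Rightarrow> 0)"
definition vv :: "real^'n::finite \<Rightarrow> real^('n+'n)" where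
  "vv w = (\<chi> j. case j of Inl k \<Rightarrow> 0 | Inr k \<Rightarrow> - (w $ k))"

lemma rows_mat:
  "rows ((\<chi> i j. if i = 1 then (case j of Inl k \<Rightarrow> w $ k | Inr k \<Rightarrow> 0)
                   else (case j of Inl k \<Rightarrow> 0 | Inr k \<Rightarrow> - (w $ k))) :: real^('n::finite + 'n)^2)
   = {uu w, vv w}"
proof -
  have r: "rows (A::real^('n+'n)^2) = {row 1 A, row 2 A}" for A
    apply (auto simp: rows_def)
    by (metis exhaust_2)
  show ?thesis unfolding r
    by (simp add: row_def uu_def vv_def vec_eq_iff)
qed

lemma span2: "span {a, b} = {x. \<exists>c d. x = c *\<^sub>R a + d *\<^sub>R b}"
proof
  show "span {a, b} \<subseteq> {x. \<exists>c d. x = c *\<^sub>R a + d *\<^sub>R b}"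
  proof
    fix x assume "x \<in> span {a, b}"
    then obtain c d where "x - c *\<^sub>R a = d *\<^sub>R b"
      by (auto simp: span_breakdown_eq span_singleton)
    then have "x = c *\<^sub>R a + d *\<^sub>R b" by (simp add: algebra_simps)
    then show "x \<in> {x. \<exists>c d. x = c *\<^sub>R a + d *\<^sub>R b}" by blast
  qed
next
  show "{x. \<exists>c d. x = c *\<^sub>R a + d *\<^sub>R b} \<subseteq> span {a, b}"
  proof clarify
    fix c d
    show "c *\<^sub>R a + d *\<^sub>R b \<in> span {a, b}"
      by (intro span_add span_scale span_base) auto
  qed
qed

lemma LOm_char:
  "(z \<in> (LOmegaS :: (real^('n::finite + 'n)) set)) \<longleftrightarrow>
   (\<forall>i j. z$Inl i * z$Inr j = z$Inl j * z$Inr i)"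
proof
  assume "z \<in> LOmegaS"
  then obtain w :: "real^'n" where "z \<in> span {uu w, vv w}"
    unfolding LOmegaS_def OmegaS_def LA_def by (auto simp: rows_mat)
  then obtain c d where "z = c *\<^sub>R uu w + d *\<^sub>R vv w" by (auto simp: span2)
  then show "\<forall>i j. z$Inl i * z$Inr j = z$Inl j * z$Inr i"
    by (auto simp: uu_def vv_def)
next
  assume H: "\<forall>i j. z$Inl i * z$Inr j = z$Inl j * z$Inr i"
  have ex: "\<exists>w::real^'n. \<exists>c d. z = c *\<^sub>R uu w + d *\<^sub>R vv w"
  proof (cases "\<forall>k. z$Inl k = 0")
    case True
    have "z = 0 *\<^sub>R uu (\<chi> k. - z$Inr k) + 1 *\<^sub>R vv (\<chi> k. - z$Inr k)"
      using True by (auto simp: uu_def vv_def vec_eq_iff split: sum.split)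
    then show ?thesis by blast
  next
    case False
    then obtain i where i: "z$Inl i \<noteq> 0" by auto
    have "z = 1 *\<^sub>R uu (\<chi> k. z$Inl k) + (- (z$Inr i / z$Inl i)) *\<^sub>R vv (\<chi> k. z$Inl k)"
    proof (clarsimp simp: uu_def vv_def vec_eq_iff split: sum.split)
      fix j
      have "z$Inl i * z$Inr j = z$Inl j * z$Inr i" using H by auto
      then show "z $ Inr j = z $ Inr i * z $ Inl j / z $ Inl i" using i
        by (simp add: field_simps)
    qed
    then show ?thesis by blast
  qed
  then obtain w :: "real^'n" where "z \<in> span {uu w, vv w}" by (auto simp: span2)
  then show "z \<in> LOmegaS"
    unfolding LOmegaS_def OmegaS_def LA_def by (auto simp: rows_mat)
qed

lemma LOm_closed: "closed (LOmegaS :: (real^('n::finite + 'n)) set)"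
proof -
  have "(LOmegaS :: (real^('n::finite + 'n)) set) =
     {z. \<forall>i j. z$Inl i * z$Inr j = z$Inl j * z$Inr i}"
    using LOm_char by blast
  moreover have "closed {z::real^('n + 'n). \<forall>i j. z$Inl i * z$Inr j = z$Inl j * z$Inr i}"
    by (intro closed_Collect_all closed_Collect_eq continuous_intros)
  ultimately show ?thesis by simp
qed

lemma NS_eq: "(NS :: (real^('n::finite + 'n)) set) = LOmegaS"
proof
  show "LOmegaS \<subseteq> (NS :: (real^('n::finite + 'n)) set)"
    unfolding NS_def POmegaS_def by auto
next
  show "(NS :: (real^('n::finite + 'n)) set) \<subseteq> LOmegaS"
  proof
    fix z :: "real^('n + 'n)"
    assume z: "z \<in> NS"
    have "z$Inl i * z$Inr j = z$Inl j * z$Inr i" for i j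
    proof -
      let ?p = "\<lambda>x::real^('n + 'n). x$Inl i * x$Inr j + (\<lambda>x. -1) x * (x$Inl j * x$Inr i)"
      have "real_polyfun ?p"
        by (intro real_polyfun.add real_polyfun.mult real_polyfun.coord real_polyfun.const)
      moreover have "\<forall>y\<in>LOmegaS. ?p y = 0" using LOm_char by fastforce
      ultimately have "?p \<in> POmegaS" unfolding POmegaS_def by blast
      then have "?p z = 0" using z unfolding NS_def by blast
      then show ?thesis by simp
    qed
    then show "z \<in> LOmegaS" using LOm_char by blast
  qed
qed

theorem theorem4p2:
  assumes "CARD('n::finite) > 1"
  shows "(LOmegaS :: (real^('n + 'n)) set) = closure LOmegaS \<and> closure (LOmegaS :: (real^('n + 'n)) set) = NS"
  using LOm_closed NS_eq closure_closed by metis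

end
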